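(* Let $\phi$ be a positive function on closed curves such that $\phi(c)\ge a\,\mathrm{len}(c)$ for every curve $c$, for some constant $a>0$. Let $C\in C^1(I;\mathbb R^n)$ be a homotopy whose curves $C(\cdot,v)$ are all immersed. Then $$\int_0^1\phi\big(C(\cdot,v)\big)\int_{S^1}|\pi_N\partial_vC|^2|\partial_\theta C|\,d\theta\,dv\;\ge\;a\Big(\int_I|\partial_vC\wedge\partial_\theta C|\,d\theta\,dv\Big)^2 .$$ (The right-hand integral is the area swept out by the homotopy; hence the energy of any homotopy between $c_0,c_1$ is bounded below by $a$ times the square of the infimum of swept areas.)
   Context: $S^1=\mathbb R/2\pi\mathbb Z$, $I=S^1\times[0,1]$; $\mathrm{len}(c)=\int_{S^1}|\dot c|\,d\theta$; $T=\partial_\theta C/|\partial_\theta C|$, $\pi_Nw=w-\langle w,T\rangle T$; for $V,W\in\mathbb R^n$, $|V\wedge W|^2=|V|^2|W|^2-\langle V,W\rangle^2$ (the norm of the vector of all $2\times2$ minors of the matrix with columns $V,W$). *)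

theory Defs
  imports "HOL-Analysis.Analysis"
begin

text \<open>Curves on S^1 = R/2piZ are represented as 2pi-periodic functions real => 'a.
  A homotopy C on I = S^1 x [0,1] is a function C theta v, 2pi-periodic in theta.\<close>

definition closed_C1_curve :: "(real \<Rightarrow> 'a::euclidean_space) \<Rightarrow> bool" where
  "closed_C1_curve c \<longleftrightarrow> (\<forall>\<theta>. c (\<theta> + 2*pi) = c \<theta>) \<and> c C1_differentiable_on UNIV"

definition len :: "(real \<Rightarrow> 'a::euclidean_space) \<Rightarrow> real" where
  "len c = integral {0..2*pi} (\<lambda>\<theta>. norm (vector_derivative c (at \<theta>)))"

definition dth :: "(real \<Rightarrow> real \<Rightarrow> 'a::euclidean_space) \<Rightarrow> real \<Rightarrow> real \<Rightarrow> 'a" where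
  "dth C \<theta> v = vector_derivative (\<lambda>t. C t v) (at \<theta>)"

definition dv :: "(real \<Rightarrow> real \<Rightarrow> 'a::euclidean_space) \<Rightarrow> real \<Rightarrow> real \<Rightarrow> 'a" where
  "dv C \<theta> v = vector_derivative (\<lambda>s. C \<theta> s) (at v within {0..1})"

definition C1_homotopy :: "(real \<Rightarrow> real \<Rightarrow> 'a::euclidean_space) \<Rightarrow> bool" where
  "C1_homotopy C \<longleftrightarrow>
     (\<forall>\<theta> v. C (\<theta> + 2*pi) v = C \<theta> v) \<and>
     (\<forall>\<theta>. \<forall>v\<in>{0..1}. (\<lambda>p. C (fst p) (snd p)) differentiable (at (\<theta>, v) within UNIV \<times> {0..1})) \<and>
     continuous_on (UNIV \<times> {0..1}) (\<lambda>p. dth C (fst p) (snd p)) \<and>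
     continuous_on (UNIV \<times> {0..1}) (\<lambda>p. dv C (fst p) (snd p))"

definition immersed_homotopy :: "(real \<Rightarrow> real \<Rightarrow> 'a::euclidean_space) \<Rightarrow> bool" where
  "immersed_homotopy C \<longleftrightarrow> (\<forall>\<theta>. \<forall>v\<in>{0..1}. dth C \<theta> v \<noteq> 0)"

definition unit_tangent :: "(real \<Rightarrow> real \<Rightarrow> 'a::euclidean_space) \<Rightarrow> real \<Rightarrow> real \<Rightarrow> 'a" where
  "unit_tangent C \<theta> v = (1 / norm (dth C \<theta> v)) *\<^sub>R dth C \<theta> v"

definition piN :: "'a::euclidean_space \<Rightarrow> 'a \<Rightarrow> 'a" where
  "piN T w = w - (w \<bullet> T) *\<^sub>R T"

definition wedge_norm :: "'a::euclidean_space \<Rightarrow> 'a \<Rightarrow> real" where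
  "wedge_norm V W = sqrt ((norm V)\<^sup>2 * (norm W)\<^sup>2 - (V \<bullet> W)\<^sup>2)"

definition normal_energy :: "(real \<Rightarrow> real \<Rightarrow> 'a::euclidean_space) \<Rightarrow> real \<Rightarrow> real" where
  "normal_energy C v = integral {0..2*pi}
     (\<lambda>\<theta>. (norm (piN (unit_tangent C \<theta> v) (dv C \<theta> v)))\<^sup>2 * norm (dth C \<theta> v))"

end

theory Submission
  imports Defs
begin

lemma quad_disc:
  fixes A B L :: real
  assumes "\<And>t. 0 \<le> t^2 * A - 2 * t * B + L" and "A \<ge> 0"
  shows "B^2 \<le> A * L"
proof (cases "A > 0")
  case True
  have "0 \<le> (B/A)^2 * A - 2 * (B/A) * B + L" by (rule assms(1))
  also have "\<dots> = L - B^2 / A" using True by (simp add: field_simps power2_eq_square)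
  finally show ?thesis using True by (simp add: field_simps mult.commute)
next
  case False
  then have A0: "A = 0" using assms(2) by simp
  have "B = 0"
  proof (rule ccontr)
    assume "B \<noteq> 0"
    have "0 \<le> ((L+1)/(2*B))^2 * A - 2 * ((L+1)/(2*B)) * B + L" by (rule assms(1))
    also have "\<dots> = -1" using A0 \<open>B \<noteq> 0\<close> by (simp add: field_simps)
    finally show False by simp
  qed
  then show ?thesis using A0 by simp
qed

lemma cs_int:
  fixes f h :: "real \<Rightarrow> real"
  assumes cf: "continuous_on {\<alpha>..\<beta>} f" and ch: "continuous_on {\<alpha>..\<beta>} h"
    and hpos: "\<And>x. x \<in> {\<alpha>..\<beta>} \<Longrightarrow> h x \<ge> 0"
  shows "(integral {\<alpha>..\<beta>} (\<lambda>x. f x * h x))^2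
          \<le> integral {\<alpha>..\<beta>} (\<lambda>x. (f x)^2 * h x) * integral {\<alpha>..\<beta>} h"
proof (rule quad_disc)
  have i1: "(\<lambda>x. (f x)^2 * h x) integrable_on {\<alpha>..\<beta>}"
    by (intro integrable_continuous_real continuous_intros cf ch)
  have i2: "(\<lambda>x. f x * h x) integrable_on {\<alpha>..\<beta>}"
    by (intro integrable_continuous_real continuous_intros cf ch)
  have i3: "h integrable_on {\<alpha>..\<beta>}"
    by (intro integrable_continuous_real continuous_intros cf ch)
  show "0 \<le> integral {\<alpha>..\<beta>} (\<lambda>x. (f x)^2 * h x)"
    by (rule integral_nonneg[OF i1]) (simp add: hpos)
  fix t :: real
  have "((\<lambda>x. t^2 * ((f x)^2 * h x) - 2 * t * (f x * h x) + h x) has_integral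
     (t^2 * integral {\<alpha>..\<beta>} (\<lambda>x. (f x)^2 * h x) - 2 * t * integral {\<alpha>..\<beta>} (\<lambda>x. f x * h x)
       + integral {\<alpha>..\<beta>} h)) {\<alpha>..\<beta>}"
    by (intro has_integral_add has_integral_diff has_integral_mult_right integrable_integral i1 i2 i3)
  moreover have "\<And>x. t^2 * ((f x)^2 * h x) - 2 * t * (f x * h x) + h x = (t * f x - 1)^2 * h x"
    by (simp add: power2_eq_square algebra_simps)
  ultimately have hi: "((\<lambda>x. (t * f x - 1)^2 * h x) has_integral
     (t^2 * integral {\<alpha>..\<beta>} (\<lambda>x. (f x)^2 * h x) - 2 * t * integral {\<alpha>..\<beta>} (\<lambda>x. f x * h x)
       + integral {\<alpha>..\<beta>} h)) {\<alpha>..\<beta>}" by simp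
  show "0 \<le> t^2 * integral {\<alpha>..\<beta>} (\<lambda>x. (f x)^2 * h x) - 2 * t * integral {\<alpha>..\<beta>} (\<lambda>x. f x * h x)
       + integral {\<alpha>..\<beta>} h"
    by (rule has_integral_nonneg[OF hi]) (simp add: hpos)
qed

lemma wedge_eq:
  fixes w V :: "'a::euclidean_space"
  assumes "V \<noteq> 0"
  shows "wedge_norm w V = norm (piN ((1 / norm V) *\<^sub>R V) w) * norm V"
proof -
  have nV: "norm V > 0" using assms by simp
  define T where "T = (1 / norm V) *\<^sub>R V"
  have T1: "T \<bullet> T = 1" using nV unfolding T_def by (simp add: power2_norm_eq_inner[symmetric] power2_eq_square)
  have wT: "w \<bullet> T = (w \<bullet> V) / norm V" unfolding T_def by simp
  have "(norm (piN T w))^2 = (norm w)^2 - (w \<bullet> T)^2"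
    unfolding piN_def power2_norm_eq_inner
    by (simp add: inner_diff_left inner_diff_right inner_commute T1 algebra_simps power2_eq_square)
  then have "(norm (piN ((1 / norm V) *\<^sub>R V) w))^2 = (norm w)^2 - (w \<bullet> V)^2 / (norm V)^2"
    unfolding T_def[symmetric] wT by (simp add: power_divide)
  then have "(norm (piN ((1 / norm V) *\<^sub>R V) w) * norm V)^2 = (norm w)^2 * (norm V)^2 - (w \<bullet> V)^2"
    using nV by (simp add: power_mult_distrib field_simps)
  then show ?thesis unfolding wedge_norm_def
    by (metis abs_of_nonneg mult_nonneg_nonneg norm_ge_zero real_sqrt_abs)
qed

theorem mainTheorem11:
  fixes \<phi> :: "(real \<Rightarrow> 'a::euclidean_space) \<Rightarrow> real"
    and C :: "real \<Rightarrow> real \<Rightarrow> 'a"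
    and a :: real
  assumes a_pos: "a > 0"
    and phi_pos: "\<And>c. closed_C1_curve c \<Longrightarrow> \<phi> c > 0"
    and phi_len: "\<And>c. closed_C1_curve c \<Longrightarrow> \<phi> c \<ge> a * len c"
    and C1: "C1_homotopy C"
    and imm: "immersed_homotopy C"
    and intble: "(\<lambda>v. \<phi> (\<lambda>\<theta>. C \<theta> v) * normal_energy C v) integrable_on {0..1}"
  shows "integral {0..1} (\<lambda>v. \<phi> (\<lambda>\<theta>. C \<theta> v) * normal_energy C v)
           \<ge> a * (integral ({0..2*pi} \<times> {0..1})
                    (\<lambda>p. wedge_norm (dv C (fst p) (snd p)) (dth C (fst p) (snd p))))\<^sup>2"
proof -
  define S where "S = (UNIV :: real set) \<times> {0..1::real}"
  define Dt where "Dt = (\<lambda>p. dth C (fst p) (snd p))"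
  define Dv where "Dv = (\<lambda>p. dv C (fst p) (snd p))"
  have per: "\<And>\<theta> v. C (\<theta> + 2*pi) v = C \<theta> v"
    and diff: "\<And>\<theta> v. v \<in> {0..1} \<Longrightarrow> (\<lambda>p. C (fst p) (snd p)) differentiable (at (\<theta>, v) within S)"
    and cDt: "continuous_on S Dt" and cDv: "continuous_on S Dv"
    using C1 unfolding C1_homotopy_def S_def Dt_def Dv_def by auto
  have nz: "\<And>p. p \<in> S \<Longrightarrow> Dt p \<noteq> 0"
    using imm unfolding immersed_homotopy_def S_def Dt_def by auto
  define W where "W = (\<lambda>p. wedge_norm (Dv p) (Dt p))"
  define P where "P = (\<lambda>p. norm (piN ((1 / norm (Dt p)) *\<^sub>R Dt p) (Dv p)))"
  define Ln where "Ln = (\<lambda>p. norm (Dt p))"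
  have cP: "continuous_on S P" unfolding P_def piN_def
    by (intro continuous_intros cDt cDv) (use nz in auto)
  have cL: "continuous_on S Ln" unfolding Ln_def by (intro continuous_intros cDt)
  have WPL: "\<And>p. p \<in> S \<Longrightarrow> W p = P p * Ln p"
    unfolding W_def P_def Ln_def using nz wedge_eq by blast
  have cW: "continuous_on S W"
    by (rule continuous_on_eq[of _ "\<lambda>p. P p * Ln p"]) (intro continuous_intros cP cL, simp add: WPL)
  have Lnn: "\<And>p. Ln p \<ge> 0" unfolding Ln_def by simp
  have slice: "continuous_on {0..2*pi} (\<lambda>\<theta>. g (\<theta>, v))" if "continuous_on S g" "v \<in> {0..1}" for g :: "real \<times> real \<Rightarrow> real" and v
    by (rule continuous_on_compose2[OF that(1)]) (use that(2) in \<open>auto intro!: continuous_intros simp: S_def\<close>)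
  define w where "w = (\<lambda>v. integral {0..2*pi} (\<lambda>\<theta>. W (\<theta>, v)))"
  define E where "E = (\<lambda>v. integral {0..2*pi} (\<lambda>\<theta>. (P (\<theta>, v))^2 * Ln (\<theta>, v)))"
  define L where "L = (\<lambda>v. integral {0..2*pi} (\<lambda>\<theta>. Ln (\<theta>, v)))"
  have Eeq: "normal_energy C v = E v" for v
    unfolding normal_energy_def E_def P_def Ln_def Dt_def Dv_def unit_tangent_def by simp
  have Leq: "len (\<lambda>\<theta>. C \<theta> v) = L v" for v
    unfolding len_def L_def Ln_def Dt_def dth_def by simp
  have wsq: "(w v)^2 \<le> E v * L v" if hv: "v \<in> {0..1}" for v
  proof -
    have "w v = integral {0..2*pi} (\<lambda>\<theta>. P (\<theta>, v) * Ln (\<theta>, v))"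
      unfolding w_def by (rule integral_cong) (use hv in \<open>simp add: WPL S_def\<close>)
    then show ?thesis unfolding E_def L_def
      using cs_int[OF slice[OF cP hv] slice[OF cL hv]] Lnn by simp
  qed
  have Enn: "E v \<ge> 0" if hv: "v \<in> {0..1}" for v
    unfolding E_def
    by (rule integral_nonneg) (intro integrable_continuous_real continuous_intros slice[OF cP hv] slice[OF cL hv], simp add: Lnn)
  have closed: "closed_C1_curve (\<lambda>\<theta>. C \<theta> v)" if hv: "v \<in> {0..1}" for v
    unfolding closed_C1_curve_def C1_differentiable_on_def
  proof (intro conjI allI exI[of _ "\<lambda>\<theta>. Dt (\<theta>, v)"] ballI)
    show "C (\<theta> + 2 * pi) v = C \<theta> v" for \<theta> by (rule per)
    show "continuous_on UNIV (\<lambda>\<theta>. Dt (\<theta>, v))"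
      by (rule continuous_on_compose2[OF cDt]) (use hv in \<open>auto intro!: continuous_intros simp: S_def\<close>)
    fix \<theta> :: real
    have d1: "(\<lambda>t. (t, v)) differentiable at \<theta> within UNIV" by (intro derivative_intros)
    have "(\<lambda>p. C (fst p) (snd p)) differentiable at (\<theta>, v) within (\<lambda>t. (t, v)) ` UNIV"
      by (rule differentiable_within_subset[OF diff[OF hv]]) (use hv in \<open>auto simp: S_def\<close>)
    from differentiable_chain_within[OF d1 this]
    have "(\<lambda>t. C t v) differentiable at \<theta>" by (simp add: o_def)
    then show "((\<lambda>t. C t v) has_vector_derivative Dt (\<theta>, v)) (at \<theta>)"
      unfolding Dt_def dth_def by (simp add: vector_derivative_works[symmetric])
  qed
  have cwv: "continuous_on {0..1} w"
  proof -
    have "continuous_on ({0..1} \<times> cbox 0 (2*pi)) (\<lambda>(v, \<theta>). W (\<theta>, v))"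
    proof -
      have "continuous_on ({0..1} \<times> cbox 0 (2*pi)) (\<lambda>x. W (snd x, fst x))"
        by (rule continuous_on_compose2[OF cW]) (auto intro!: continuous_intros simp: S_def)
      then show ?thesis by (simp add: case_prod_unfold)
    qed
    from integral_continuous_on_param[OF this] show ?thesis unfolding w_def by simp
  qed
  have pt: "a * (w v)^2 \<le> \<phi> (\<lambda>\<theta>. C \<theta> v) * normal_energy C v" if hv: "v \<in> {0..1}" for v
  proof -
    have "a * (w v)^2 \<le> a * (E v * L v)" using wsq[OF hv] a_pos by simp
    also have "\<dots> = E v * (a * L v)" by simp
    also have "\<dots> \<le> E v * \<phi> (\<lambda>\<theta>. C \<theta> v)"
      using phi_len[OF closed[OF hv]] Enn[OF hv] unfolding Leq by (simp add: mult_left_mono)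
    finally show ?thesis by (simp add: Eeq mult.commute)
  qed
  have step1: "integral {0..1} (\<lambda>v. a * (w v)^2) \<le> integral {0..1} (\<lambda>v. \<phi> (\<lambda>\<theta>. C \<theta> v) * normal_energy C v)"
    by (rule integral_le[OF _ intble]) (intro integrable_continuous_real continuous_intros cwv, simp add: pt)
  have step2: "(integral {0..1} w)^2 \<le> integral {0..1} (\<lambda>v. (w v)^2)"
    using cs_int[of 0 1 w "\<lambda>_. 1"] cwv by simp
  have fub: "integral ({0..2*pi} \<times> {0..1}) (\<lambda>p. wedge_norm (dv C (fst p) (snd p)) (dth C (fst p) (snd p)))
      = integral {0..1} w"
  proof -
    have cb: "continuous_on (cbox (0, 0) (2*pi, 1)) W"
      by (rule continuous_on_subset[OF cW]) (auto simp: S_def cbox_Pair_eq)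
    have "integral ({0..2*pi} \<times> {0..1}) (\<lambda>p. wedge_norm (dv C (fst p) (snd p)) (dth C (fst p) (snd p)))
        = integral (cbox (0, 0) (2*pi, 1)) W"
      by (simp add: W_def Dv_def Dt_def cbox_Pair_eq)
    also have "\<dots> = integral (cbox 0 (2*pi)) (\<lambda>x. integral (cbox 0 1) (\<lambda>y. W (x, y)))"
      using integral_prod_continuous[OF cb] by simp
    also have "\<dots> = integral (cbox 0 1) (\<lambda>y. integral (cbox 0 (2*pi)) (\<lambda>x. W (x, y)))"
      by (rule integral_swap_continuous) (use cb in simp)
    finally show ?thesis unfolding w_def by simp
  qed
  have "a * (integral {0..1} w)^2 \<le> a * integral {0..1} (\<lambda>v. (w v)^2)"
    using step2 a_pos by simp
  also have "\<dots> = integral {0..1} (\<lambda>v. a * (w v)^2)" by simp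
  finally show ?thesis using step1 fub by simp
qed

end
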